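(* Let $\mathsf{X}$ be a totally ordered set with a $\sigma$-field $\mathcal X$ containing the sets $(-\infty,a]$, and let $P$ be a stochastically monotone Markov kernel on $\mathsf{X}$. Suppose that for $C=(-\infty,x_0]$ there exist $\epsilon>0$ and a probability measure $\nu$ with $P(x,\cdot)\geq\epsilon\nu(\cdot)$ for all $x\in C$; let $Q$ be the residual kernel ($Q(x,A)=(1-\epsilon)^{-1}(P(x,A)-\epsilon\nu(A))$ if $0<\epsilon<1$, $Q=\nu$ if $\epsilon=1$). Assume there exist $W_0:\mathsf{X}\to[1,\infty)$ and $\phi\in\mathcal{C}$ such that $PW_0(x)\leq W_0(x)-\phi(W_0(x))$ for $x\notin C$ and $\sup_C PW_0<\infty$. Let $r=r_\phi$, $v_0=\phi\circ W_0$, $\sigma_C=\inf\{n\geq0:X_n\in C\}$, $U_0(x)=\mathbb{E}_x\big[\sum_{k=0}^{\sigma_C}r(k)\big]$ and $V_0(x)=\mathbb{E}_x\big[\sum_{k=0}^{\sigma_C}v_0(X_k)\big]$. Then $U_0$, $V_0$ are finite everywhere, $b_{U_0}:=\sup_CQU_0<\infty$, $b_{V_0}:=\sup_CQV_0<\infty$, and $$U_0(x)\leq 1+\frac{r_\phi(1)}{\phi(1)}\{W_0(x)-1\}\mathbb{1}_{C^c}(x),\qquad V_0(x)\leq\sup_C\phi\circ W_0+W_0(x)\mathbb{1}_{C^c}(x),$$ $$b_{U_0}\leq 1+\frac{r_\phi(1)}{\phi(1)}\Big((1-\epsilon)^{-1}\Big\{\sup_CPW_0-\epsilon\nu(W_0)\Big\}-1\Big),\qquad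 b_{V_0}\leq\sup_C\phi\circ W_0+(1-\epsilon)^{-1}\Big\{\sup_CPW_0-\epsilon\nu(W_0)\Big\}.$$
   Context: Stochastically monotone: $x\mapsto P(x,(-\infty,a])$ is non-increasing for every $a$. $\mathbb{E}_x$ is expectation for the chain with kernel $P$ started at $x$. $\mathcal{C}$ is the set of functions $\phi:[1,\infty)\to\mathbb{R}^+$ that are concave and differentiable with $\phi(1)>0$, $\lim_{v\to\infty}\phi(v)=\infty$, $\lim_{v\to\infty}\phi'(v)=0$. For $\phi\in\mathcal C$, $H_\phi(v)=\int_1^v dx/\phi(x)$, $H_\phi^{-1}$ its inverse on $[0,\infty)$, and $r_\phi(n)=\phi(H_\phi^{-1}(n))/\phi(H_\phi^{-1}(0))$. *)

theory Defs
  imports "HOL-Probability.Probability"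
begin

definition phi_class :: "(real \<Rightarrow> real) \<Rightarrow> bool" where
  "phi_class phi \<longleftrightarrow>
     concave_on {1..} phi \<and>
     phi differentiable_on {1..} \<and>
     (\<forall>v\<ge>1. 0 < phi v) \<and>
     0 < phi 1 \<and>
     filterlim phi at_top at_top \<and>
     ((\<lambda>v. deriv phi v) \<longlongrightarrow> 0) at_top"

definition H_phi :: "(real \<Rightarrow> real) \<Rightarrow> real \<Rightarrow> real" where
  "H_phi phi v = integral {1..v} (\<lambda>x. 1 / phi x)"

definition H_phi_inv :: "(real \<Rightarrow> real) \<Rightarrow> real \<Rightarrow> real" where
  "H_phi_inv phi t = (THE v. 1 \<le> v \<and> H_phi phi v = t)"

definition r_phi :: "(real \<Rightarrow> real) \<Rightarrow> nat \<Rightarrow> real" where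
  "r_phi phi n = phi (H_phi_inv phi (real n)) / phi (H_phi_inv phi 0)"

definition path_space :: "'a measure \<Rightarrow> (nat \<Rightarrow> 'a) measure" where
  "path_space M = Pi\<^sub>M UNIV (\<lambda>_::nat. M)"

text \<open>Law under P_x of the trajectory (X_0,...,X_n) of the chain with kernel P started
  at x, realised as a measure on paths nat => 'a (coordinates beyond n are irrelevant).\<close>
primrec chain_path :: "'a measure \<Rightarrow> ('a \<Rightarrow> 'a measure) \<Rightarrow> 'a \<Rightarrow> nat \<Rightarrow> (nat \<Rightarrow> 'a) measure" where
  "chain_path M P x 0 = return (path_space M) (\<lambda>_. x)"
| "chain_path M P x (Suc n) =
     chain_path M P x n \<bind> (\<lambda>\<omega>. distr (P (\<omega> n)) (path_space M) (\<lambda>y. fun_upd \<omega> (Suc n) y))"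

text \<open>E_x [ sum_{k=0}^{sigma_C} f k (X_k) ], sigma_C = inf{n >= 0. X_n in C}.
  The index k satisfies k <= sigma_C iff X_j notin C for all j < k.  The expectation of the
  (possibly infinite) sum is the monotone limit of the expectations of the sums truncated at n,
  each of which depends only on (X_0,...,X_n).\<close>
definition exp_sum_to_hit ::
  "'a measure \<Rightarrow> ('a \<Rightarrow> 'a measure) \<Rightarrow> 'a set \<Rightarrow> (nat \<Rightarrow> 'a \<Rightarrow> ennreal) \<Rightarrow> 'a \<Rightarrow> ennreal" where
  "exp_sum_to_hit M P C f x =
     (SUP n. \<integral>\<^sup>+ \<omega>. (\<Sum>k\<in>{k. k \<le> n \<and> (\<forall>j<k. \<omega> j \<notin> C)}. f k (\<omega> k)) \<partial>chain_path M P x n)"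

definition residual_kernel ::
  "'a measure \<Rightarrow> ('a \<Rightarrow> 'a measure) \<Rightarrow> 'a measure \<Rightarrow> real \<Rightarrow> 'a \<Rightarrow> 'a measure" where
  "residual_kernel M P \<nu> \<epsilon> x =
     (if \<epsilon> = 1 then \<nu>
      else measure_of (space M) (sets M)
             (\<lambda>A. (emeasure (P x) A - ennreal \<epsilon> * emeasure \<nu> A) / ennreal (1 - \<epsilon>)))"

definition stoch_monotone :: "('a::linorder) measure \<Rightarrow> ('a \<Rightarrow> 'a measure) \<Rightarrow> bool" where
  "stoch_monotone M P \<longleftrightarrow> (\<forall>a x y. x \<le> y \<longrightarrow> measure (P y) {..a} \<le> measure (P x) {..a})"

end

theory Submission
  imports Defs
begin


lemma path_space_UNIV: "space M = UNIV \<Longrightarrow> space (path_space M) = UNIV"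
  by (simp add: path_space_def space_PiM)

lemma meas_comp: "(\<lambda>\<omega>. \<omega> j) \<in> path_space M \<rightarrow>\<^sub>M M"
  unfolding path_space_def by measurable

lemma meas_upd:
  assumes "space M = UNIV"
  shows "(\<lambda>(\<omega>, y). fun_upd \<omega> n y) \<in> (path_space M \<Otimes>\<^sub>M M) \<rightarrow>\<^sub>M path_space M"
  unfolding path_space_def
proof (rule measurable_PiM_single')
  fix i :: nat
  show "(\<lambda>x. (case x of (\<omega>, y) \<Rightarrow> fun_upd \<omega> n y) i) \<in> ((Pi\<^sub>M UNIV (\<lambda>_. M)) \<Otimes>\<^sub>M M) \<rightarrow>\<^sub>M M"
    by (cases "i = n") (simp_all add: case_prod_beta', measurable)
qed (auto simp: assms space_PiM)

lemma meas_upd2: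
  assumes "space M = UNIV"
  shows "(\<lambda>y. fun_upd \<omega> n y) \<in> M \<rightarrow>\<^sub>M path_space M"
  unfolding path_space_def
proof (rule measurable_PiM_single')
  fix i :: nat
  show "(\<lambda>y. (fun_upd \<omega> n y) i) \<in> M \<rightarrow>\<^sub>M M"
    by (cases "i = n") (simp_all add: assms)
qed (auto simp: assms space_PiM)

lemma sets_chain_path:
  assumes "space M = UNIV" "P \<in> M \<rightarrow>\<^sub>M prob_algebra M"
  shows "sets (chain_path M P x n) = sets (path_space M)"
proof (induction n)
  case 0 then show ?case by simp
next
  case (Suc n)
  have "space (chain_path M P x n) = UNIV"
    using Suc sets_eq_imp_space_eq path_space_UNIV[OF assms(1)] by metis
  then have "space (chain_path M P x n) \<noteq> {}" by simp
  then show ?case by (simp add: Suc)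
qed

definition Ssum :: "'a set \<Rightarrow> (nat \<Rightarrow> 'a \<Rightarrow> ennreal) \<Rightarrow> nat \<Rightarrow> (nat \<Rightarrow> 'a) \<Rightarrow> ennreal" where
  "Ssum C f n \<omega> = (\<Sum>k\<in>{k. k \<le> n \<and> (\<forall>j<k. \<omega> j \<notin> C)}. f k (\<omega> k))"

lemma Ssum_alt: "Ssum C f n \<omega> = (\<Sum>k\<le>n. (if \<forall>j<k. \<omega> j \<notin> C then f k (\<omega> k) else 0))"
proof -
  have "{k. k \<le> n \<and> (\<forall>j<k. \<omega> j \<notin> C)} = {k\<in>{..n}. \<forall>j<k. \<omega> j \<notin> C}" by auto
  moreover have "(\<Sum>k\<in>{k\<in>{..n}. \<forall>j<k. \<omega> j \<notin> C}. f k (\<omega> k)) = (\<Sum>k\<le>n. (if \<forall>j<k. \<omega> j \<notin> C then f k (\<omega> k) else 0))"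
    by (rule sum.inter_filter) simp
  ultimately show ?thesis unfolding Ssum_def by simp
qed

lemma Ssum_meas:
  assumes "C \<in> sets M" "\<And>k. f k \<in> borel_measurable M"
  shows "Ssum C f n \<in> borel_measurable (path_space M)"
proof -
  have [measurable]: "C \<in> sets M" "\<And>k. f k \<in> borel_measurable M" by (fact assms)+
  have [measurable]: "\<And>j. (\<lambda>\<omega>. \<omega> j) \<in> path_space M \<rightarrow>\<^sub>M M" by (rule meas_comp)
  show ?thesis unfolding Ssum_alt by measurable
qed

lemma Ssum_Suc: "Ssum C f (Suc n) \<omega> = Ssum C f n \<omega> + (if \<forall>j\<le>n. \<omega> j \<notin> C then f (Suc n) (\<omega> (Suc n)) else 0)"
  unfolding Ssum_alt by (simp add: less_Suc_eq_le)

lemma Ssum_upd: "Ssum C f n (fun_upd \<omega> (Suc n) y) = Ssum C f n \<omega>"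
  unfolding Ssum_alt by (intro sum.cong) auto

lemma forward:
  assumes sp: "space M = UNIV" and K: "P \<in> M \<rightarrow>\<^sub>M prob_algebra M"
    and Cm: "C \<in> sets M" and fm: "\<And>k. f k \<in> borel_measurable M"
    and Pm: "\<And>k. \<Phi> k \<in> borel_measurable M"
    and step: "\<And>n y'. y' \<notin> C \<Longrightarrow>
       (\<integral>\<^sup>+y. (f (Suc n) y + indicator (-C) y * \<Phi> (Suc n) y) \<partial>P y') \<le> \<Phi> n y'"
  shows "(\<integral>\<^sup>+\<omega>. Ssum C f n \<omega> \<partial>chain_path M P x n) \<le> f 0 x + indicator (-C) x * \<Phi> 0 x"
proof -
  have [measurable]: "C \<in> sets M" "\<And>k. f k \<in> borel_measurable M" "\<And>k. \<Phi> k \<in> borel_measurable M"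
    by (fact assms)+
  have [measurable]: "\<And>j. (\<lambda>\<omega>. \<omega> j) \<in> path_space M \<rightarrow>\<^sub>M M" by (rule meas_comp)
  have [measurable]: "\<And>n. Ssum C f n \<in> borel_measurable (path_space M)" by (rule Ssum_meas) (fact assms)+
  have Psub: "P \<in> M \<rightarrow>\<^sub>M subprob_algebra M" by (rule measurable_prob_algebraD[OF K])
  have Pprob: "prob_space (P y)" "sets (P y) = sets M" for y
    using measurable_space[OF K, of y] sp by (auto simp: space_prob_algebra)
  define A where "A n \<omega> = Ssum C f n \<omega> + (if \<forall>j\<le>n. \<omega> j \<notin> C then \<Phi> n (\<omega> n) else 0)" for n \<omega>
  have Am[measurable]: "A n \<in> borel_measurable (path_space M)" for n
    unfolding A_def by measurable
  have SA: "Ssum C f n \<omega> \<le> A n \<omega>" for n \<omega> unfolding A_def by simp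
  have sets_cp: "sets (chain_path M P x n) = sets (path_space M)" for n
    by (rule sets_chain_path[OF sp K])
  have dec: "(\<integral>\<^sup>+\<omega>. A (Suc n) \<omega> \<partial>chain_path M P x (Suc n)) \<le> (\<integral>\<^sup>+\<omega>. A n \<omega> \<partial>chain_path M P x n)" for n
  proof -
    define Kn where "Kn = (\<lambda>\<omega>. distr (P (\<omega> n)) (path_space M) (\<lambda>y. fun_upd \<omega> (Suc n) y))"
    have Knm: "Kn \<in> chain_path M P x n \<rightarrow>\<^sub>M subprob_algebra (path_space M)"
      unfolding Kn_def
    proof (rule measurable_distr2)
      show "(\<lambda>(\<omega>, y). fun_upd \<omega> (Suc n) y) \<in> chain_path M P x n \<Otimes>\<^sub>M M \<rightarrow>\<^sub>M path_space M"
        using meas_upd[OF sp, of "Suc n"] by (simp add: sets_cp cong: measurable_cong_sets sets_pair_measure_cong)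
      show "(\<lambda>\<omega>. P (\<omega> n)) \<in> chain_path M P x n \<rightarrow>\<^sub>M subprob_algebra M"
        using measurable_comp[OF meas_comp Psub, of n] by (simp add: sets_cp o_def cong: measurable_cong_sets)
    qed
    have "(\<integral>\<^sup>+\<omega>. A (Suc n) \<omega> \<partial>chain_path M P x (Suc n)) = (\<integral>\<^sup>+\<omega>. \<integral>\<^sup>+\<omega>'. A (Suc n) \<omega>' \<partial>Kn \<omega> \<partial>chain_path M P x n)"
      unfolding chain_path.simps(2) Kn_def[symmetric] by (rule nn_integral_bind[OF Am Knm])
    also have "\<dots> \<le> (\<integral>\<^sup>+\<omega>. A n \<omega> \<partial>chain_path M P x n)"
    proof (rule nn_integral_mono)
      fix \<omega>
      have "(\<integral>\<^sup>+\<omega>'. A (Suc n) \<omega>' \<partial>Kn \<omega>) = (\<integral>\<^sup>+y. A (Suc n) (fun_upd \<omega> (Suc n) y) \<partial>P (\<omega> n))"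
        unfolding Kn_def
        by (rule nn_integral_distr) (auto simp: meas_upd2[OF sp] measurable_cong_sets[OF Pprob(2) refl])
      also have "\<dots> = (\<integral>\<^sup>+y. Ssum C f n \<omega> + (if \<forall>j\<le>n. \<omega> j \<notin> C then f (Suc n) y + indicator (-C) y * \<Phi> (Suc n) y else 0) \<partial>P (\<omega> n))"
        by (intro nn_integral_cong) (auto simp: A_def Ssum_Suc Ssum_upd le_Suc_eq indicator_def)
      also have "\<dots> \<le> A n \<omega>"
      proof (cases "\<forall>j\<le>n. \<omega> j \<notin> C")
        case True
        have "(\<integral>\<^sup>+y. Ssum C f n \<omega> + (f (Suc n) y + indicator (-C) y * \<Phi> (Suc n) y) \<partial>P (\<omega> n))
            = (\<integral>\<^sup>+y. Ssum C f n \<omega> \<partial>P (\<omega> n)) + (\<integral>\<^sup>+y. (f (Suc n) y + indicator (-C) y * \<Phi> (Suc n) y) \<partial>P (\<omega> n))"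
          by (rule nn_integral_add) (auto simp: measurable_cong_sets[OF Pprob(2) refl])
        also have "\<dots> \<le> Ssum C f n \<omega> + \<Phi> n (\<omega> n)"
          using step[of "\<omega> n" n] True prob_space.emeasure_space_1[OF Pprob(1)]
          by (intro add_mono) (auto simp: sp)
        finally show ?thesis using True by (simp add: A_def)
      next
        case False
        then have "A n \<omega> = Ssum C f n \<omega>" unfolding A_def by auto
        moreover have "(\<integral>\<^sup>+y. Ssum C f n \<omega> + (if \<forall>j\<le>n. \<omega> j \<notin> C then f (Suc n) y + indicator (-C) y * \<Phi> (Suc n) y else 0) \<partial>P (\<omega> n))
           = (\<integral>\<^sup>+y. Ssum C f n \<omega> \<partial>P (\<omega> n))"
          using False by (intro nn_integral_cong) auto
        ultimately show ?thesis
          using prob_space.emeasure_space_1[OF Pprob(1)] by (simp add: sp)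
      qed
      finally show "(\<integral>\<^sup>+\<omega>'. A (Suc n) \<omega>' \<partial>Kn \<omega>) \<le> A n \<omega>" .
    qed
    finally show ?thesis .
  qed
  have "(\<integral>\<^sup>+\<omega>. A n \<omega> \<partial>chain_path M P x n) \<le> (\<integral>\<^sup>+\<omega>. A 0 \<omega> \<partial>chain_path M P x 0)" for n
  proof (induction n)
    case (Suc n) then show ?case using dec[of n] by (rule order_trans[rotated])
  qed simp
  also have "(\<integral>\<^sup>+\<omega>. A 0 \<omega> \<partial>chain_path M P x 0) = A 0 (\<lambda>_. x)"
    by (simp add: nn_integral_return path_space_UNIV[OF sp])
  also have "A 0 (\<lambda>_. x) = f 0 x + indicator (-C) x * \<Phi> 0 x"
    by (simp add: A_def Ssum_alt indicator_def)
  finally show ?thesis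
    by (rule order_trans[OF nn_integral_mono[OF SA]])
qed


lemma nn_integral_lincomb:
  fixes L N1 N2 :: "'a measure"
  assumes sL: "sets L = sets M" and s1: "sets N1 = sets M" and s2: "sets N2 = sets M"
    and eq: "\<And>A. A \<in> sets M \<Longrightarrow> emeasure L A = emeasure N1 A + emeasure N2 A"
    and f: "f \<in> borel_measurable M"
  shows "(\<integral>\<^sup>+y. f y \<partial>L) = (\<integral>\<^sup>+y. f y \<partial>N1) + (\<integral>\<^sup>+y. f y \<partial>N2)"
proof -
  note BM = measurable_cong_sets[OF sL refl, of borel] measurable_cong_sets[OF s1 refl, of borel]
    measurable_cong_sets[OF s2 refl, of borel]
  show ?thesis
  using f
proof induction
  case (cong f g)
  have sp: "space L = space M" "space N1 = space M" "space N2 = space M"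
    using sets_eq_imp_space_eq sL s1 s2 by blast+
  have "(\<integral>\<^sup>+y. f y \<partial>L) = (\<integral>\<^sup>+y. g y \<partial>L)" "(\<integral>\<^sup>+y. f y \<partial>N1) = (\<integral>\<^sup>+y. g y \<partial>N1)"
    "(\<integral>\<^sup>+y. f y \<partial>N2) = (\<integral>\<^sup>+y. g y \<partial>N2)"
    using cong(3) sp by (auto intro!: nn_integral_cong)
  then show ?case using cong(4) by simp
next
  case (set A)
  then have "A \<in> sets L" "A \<in> sets N1" "A \<in> sets N2" using sL s1 s2 by auto
  then show ?case using eq[OF set] by (simp add: nn_integral_indicator)
next
  case (mult u c)
  have m: "u \<in> borel_measurable L" "u \<in> borel_measurable N1" "u \<in> borel_measurable N2"
    using mult(2) BM by auto
  have "(\<integral>\<^sup>+y. c * u y \<partial>L) = c * (\<integral>\<^sup>+y. u y \<partial>L)" by (rule nn_integral_cmult[OF m(1)])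
  also have "\<dots> = c * (\<integral>\<^sup>+y. u y \<partial>N1) + c * (\<integral>\<^sup>+y. u y \<partial>N2)"
    unfolding mult(4) by (rule distrib_left)
  also have "\<dots> = (\<integral>\<^sup>+y. c * u y \<partial>N1) + (\<integral>\<^sup>+y. c * u y \<partial>N2)"
    by (simp only: nn_integral_cmult[OF m(2)] nn_integral_cmult[OF m(3)])
  finally show ?case .
next
  case (add u v)
  have m: "u \<in> borel_measurable L" "u \<in> borel_measurable N1" "u \<in> borel_measurable N2"
    "v \<in> borel_measurable L" "v \<in> borel_measurable N1" "v \<in> borel_measurable N2"
    using add(1,3) BM by auto
  have "(\<integral>\<^sup>+y. v y + u y \<partial>L) = (\<integral>\<^sup>+y. v y \<partial>L) + (\<integral>\<^sup>+y. u y \<partial>L)"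
    by (rule nn_integral_add[OF m(4) m(1)])
  also have "\<dots> = ((\<integral>\<^sup>+y. v y \<partial>N1) + (\<integral>\<^sup>+y. u y \<partial>N1)) + ((\<integral>\<^sup>+y. v y \<partial>N2) + (\<integral>\<^sup>+y. u y \<partial>N2))"
    unfolding add(6) add(7) by (simp only: add.assoc add.left_commute)
  also have "\<dots> = (\<integral>\<^sup>+y. v y + u y \<partial>N1) + (\<integral>\<^sup>+y. v y + u y \<partial>N2)"
    by (simp only: nn_integral_add[OF m(5) m(2)] nn_integral_add[OF m(6) m(3)])
  finally show ?case .
next
  case (seq U)
  have m: "U i \<in> borel_measurable L" "U i \<in> borel_measurable N1" "U i \<in> borel_measurable N2" for i
    using seq(1) BM by auto
  have sup: "(SUP i. U i) = (\<lambda>x. SUP i. U i x)" by (rule ext) (simp add: SUP_apply image_comp)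
  have "(\<integral>\<^sup>+y. (SUP i. U i) y \<partial>L) = (SUP i. (\<integral>\<^sup>+y. U i y \<partial>L))"
    unfolding sup by (rule nn_integral_monotone_convergence_SUP[OF seq(3) m(1)])
  also have "\<dots> = (SUP i. (\<integral>\<^sup>+y. U i y \<partial>N1) + (\<integral>\<^sup>+y. U i y \<partial>N2))"
    using seq(5) by simp
  also have "\<dots> = (SUP i. (\<integral>\<^sup>+y. U i y \<partial>N1)) + (SUP i. (\<integral>\<^sup>+y. U i y \<partial>N2))"
    by (intro ennreal_SUP_add incseq_nn_integral seq(3))
  also have "\<dots> = (\<integral>\<^sup>+y. (SUP i. U i) y \<partial>N1) + (\<integral>\<^sup>+y. (SUP i. U i) y \<partial>N2)"
    unfolding sup by (simp add: nn_integral_monotone_convergence_SUP[OF seq(3) m(2)]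
        nn_integral_monotone_convergence_SUP[OF seq(3) m(3)])
  finally show ?case .
qed
qed




locale phiC =
  fixes \<phi> :: "real \<Rightarrow> real"
  assumes pc: "phi_class \<phi>"
begin

lemma conc: "concave_on {1..} \<phi>" and diffon: "\<phi> differentiable_on {1..}"
  and pos: "\<And>v. 1 \<le> v \<Longrightarrow> 0 < \<phi> v"
  using pc unfolding phi_class_def by auto

lemma pos_ne: "1 \<le> v \<Longrightarrow> \<phi> v \<noteq> 0" using pos[of v] by simp

lemma cont: "continuous_on {1..} \<phi>"
  using diffon differentiable_imp_continuous_on by blast

lemma contI: "1 \<le> a \<Longrightarrow> continuous_on {a..b} \<phi>"
  by (rule continuous_on_subset[OF cont]) auto

lemma der: "1 < x \<Longrightarrow> (\<phi> has_real_derivative deriv \<phi> x) (at x)"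
proof -
  assume x: "1 < x"
  have "\<phi> differentiable at x within {1..}" using diffon x unfolding differentiable_on_def by auto
  moreover have "at x within {1..} = at x" using x by (intro at_within_interior) auto
  ultimately have "\<phi> differentiable at x" by simp
  then show ?thesis using DERIV_deriv_iff_real_differentiable by blast
qed

lemma tangent: assumes c: "1 < c" and x: "1 \<le> x" shows "\<phi> x \<le> \<phi> c + deriv \<phi> c * (x - c)"
proof -
  have cv: "convex_on {1..} (\<lambda>x. - \<phi> x)" using conc by (simp add: concave_on_def)
  have dv: "((\<lambda>x. - \<phi> x) has_field_derivative - deriv \<phi> c) (at c within {1..})"
    using der[OF c] by (intro DERIV_minus) (rule has_field_derivative_at_within)
  have conn: "connected {1::real..}" by (simp add: is_interval_connected)
  have "- deriv \<phi> c * (x - c) \<le> - \<phi> x - - \<phi> c"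
    by (rule convex_on_imp_above_tangent[OF cv conn _ _ dv]) (use c x in simp_all)
  then show ?thesis by (simp add: algebra_simps)
qed

lemma der_nonneg: assumes c: "1 < c" shows "0 \<le> deriv \<phi> c"
proof (rule ccontr)
  assume "\<not> 0 \<le> deriv \<phi> c"
  then have d: "deriv \<phi> c < 0" by simp
  define x where "x = c + \<phi> c / (- deriv \<phi> c)"
  have "\<phi> c > 0" using pos c by auto
  moreover have "- deriv \<phi> c > 0" using d by simp
  ultimately have "\<phi> c / (- deriv \<phi> c) > 0" by (rule divide_pos_pos)
  then have "x > c" unfolding x_def by simp
  then have x1: "x \<ge> 1" using c by simp
  have "\<phi> x \<le> \<phi> c + deriv \<phi> c * (x - c)" by (rule tangent[OF c x1])
  also have "\<dots> = 0"
  proof -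
    have "deriv \<phi> c \<noteq> 0" using d by simp
    then have "deriv \<phi> c * (x - c) = - \<phi> c" unfolding x_def by simp
    then show ?thesis by simp
  qed
  finally show False using pos[OF \<open>x \<ge> 1\<close>] by linarith
qed

lemma der_antimono: assumes "1 < a" "a \<le> b" shows "deriv \<phi> b \<le> deriv \<phi> a"
proof (cases "a = b")
  case False
  then have ab: "a < b" using assms by simp
  have 1: "\<phi> b \<le> \<phi> a + deriv \<phi> a * (b - a)" using tangent assms by auto
  have 2: "\<phi> a \<le> \<phi> b + deriv \<phi> b * (a - b)" using tangent assms by auto
  from 1 2 have "deriv \<phi> b * (b - a) \<le> deriv \<phi> a * (b - a)" by (simp add: algebra_simps)
  then show ?thesis using ab by simp
qed simp

lemma mono: assumes "1 \<le> a" "a \<le> b" shows "\<phi> a \<le> \<phi> b"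
proof (rule DERIV_nonneg_imp_increasing_open[OF assms(2)])
  fix x assume "a < x" "x < b"
  then have "1 < x" using assms by simp
  then show "\<exists>y. (\<phi> has_real_derivative y) (at x) \<and> 0 \<le> y"
    using der der_nonneg by blast
qed (rule contI[OF assms(1)])

definition K where "K = \<phi> 2 + deriv \<phi> 2"

lemma K_pos: "0 < K" using pos[of 2] der_nonneg[of 2] by (simp add: K_def)

lemma lin_bound: assumes "1 \<le> x" shows "\<phi> x \<le> K * x"
proof -
  have "\<phi> x \<le> \<phi> 2 + deriv \<phi> 2 * (x - 2)" using tangent[of 2 x] assms by simp
  also have "\<dots> \<le> \<phi> 2 * x + deriv \<phi> 2 * x"
  proof -
    have e: "\<phi> 2 * x + deriv \<phi> 2 * x - (\<phi> 2 + deriv \<phi> 2 * (x - 2)) = \<phi> 2 * (x - 1) + 2 * deriv \<phi> 2"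
      by (simp add: algebra_simps)
    have "0 \<le> \<phi> 2 * (x - 1)" using pos[of 2] assms by simp
    moreover have "0 \<le> deriv \<phi> 2" using der_nonneg[of 2] by simp
    ultimately show ?thesis using e by linarith
  qed
  also have "\<dots> = K * x" by (simp add: K_def algebra_simps)
  finally show ?thesis .
qed


abbreviation H where "H \<equiv> H_phi \<phi>"
abbreviation G where "G \<equiv> H_phi_inv \<phi>"

lemma inv_cont: "continuous_on {1..b} (\<lambda>x. 1 / \<phi> x)"
  by (intro continuous_intros contI) (auto dest: pos_ne)

lemma Hder_within: assumes "1 \<le> v" "v \<le> b"
  shows "(H has_real_derivative 1 / \<phi> v) (at v within {1..b})"
proof -
  have "((\<lambda>x. integral {1..x} (\<lambda>x. 1 / \<phi> x)) has_real_derivative 1 / \<phi> v) (at v within {1..b})"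
    by (rule integral_has_real_derivative[OF inv_cont]) (use assms in simp)
  then show ?thesis unfolding H_phi_def[abs_def] .
qed

lemma Hder: assumes "1 < v" shows "(H has_real_derivative 1 / \<phi> v) (at v)"
proof -
  have "(H has_real_derivative 1 / \<phi> v) (at v within {1..v+1})"
    by (rule Hder_within) (use assms in auto)
  moreover have "at v within {1..v+1} = at v"
    by (rule at_within_interior) (use assms in simp)
  ultimately show ?thesis by simp
qed

lemma Hcont: "continuous_on {1..b} H"
proof (rule continuous_on_eq_continuous_within[THEN iffD2], intro ballI)
  fix v assume "v \<in> {1..b}"
  then show "continuous (at v within {1..b}) H"
    using Hder_within[of v b] by (intro DERIV_continuous) auto
qed

lemma HcontI: "1 \<le> a \<Longrightarrow> continuous_on {a..b} H"
  by (rule continuous_on_subset[OF Hcont]) auto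

lemma H1: "H 1 = 0" by (simp add: H_phi_def)

lemma Hstrict: assumes "1 \<le> a" "a < b" shows "H a < H b"
proof (rule DERIV_pos_imp_increasing_open[OF assms(2)])
  fix x assume "a < x" "x < b"
  then have "1 < x" using assms by simp
  then show "\<exists>y. (H has_real_derivative y) (at x) \<and> 0 < y"
    using Hder pos by (intro exI conjI) auto
qed (rule HcontI[OF assms(1)])

lemma Hmono: "1 \<le> a \<Longrightarrow> a \<le> b \<Longrightarrow> H a \<le> H b"
  using Hstrict[of a b] by (cases "a = b") auto

lemma Hnonneg: "1 \<le> v \<Longrightarrow> 0 \<le> H v"
  using Hmono[of 1 v] H1 by simp

lemma Hpos: "1 < v \<Longrightarrow> 0 < H v"
  using Hstrict[of 1 v] H1 by simp

lemma Hlow: assumes v: "1 \<le> v" shows "ln v / K \<le> H v"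
proof -
  have "(\<lambda>u. H u - ln u / K) 1 \<le> (\<lambda>u. H u - ln u / K) v"
  proof (rule DERIV_nonneg_imp_increasing_open[OF v])
    fix x assume x: "1 < x" "x < v"
    have "((\<lambda>u. H u - ln u / K) has_real_derivative 1 / \<phi> x - (1 / x) / K) (at x)"
      using x by (intro DERIV_diff Hder DERIV_cdivide DERIV_ln_divide) auto
    moreover have "(1 / x) / K \<le> 1 / \<phi> x"
    proof -
      have "\<phi> x \<le> K * x" using lin_bound x by simp
      then have "1 / (K * x) \<le> 1 / \<phi> x" using pos[of x] x by (intro divide_left_mono) auto
      then show ?thesis by (simp add: mult.commute)
    qed
    ultimately show "\<exists>y. ((\<lambda>u. H u - ln u / K) has_real_derivative y) (at x) \<and> 0 \<le> y"
      by (intro exI conjI) auto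
  next
    show "continuous_on {1..v} (\<lambda>u. H u - ln u / K)"
      using K_pos by (intro continuous_intros Hcont) auto
  qed
  then show ?thesis using H1 by simp
qed

lemma Hgap: assumes p: "1 \<le> p" and pv: "p \<le> v" shows "(v - p) / \<phi> v \<le> H v - H p"
proof -
  have "(\<lambda>u. H u - u / \<phi> v) p \<le> (\<lambda>u. H u - u / \<phi> v) v"
  proof (rule DERIV_nonneg_imp_increasing_open[OF pv])
    fix x assume x: "p < x" "x < v"
    have "((\<lambda>u. H u - u / \<phi> v) has_real_derivative 1 / \<phi> x - 1 / \<phi> v) (at x)"
      using x p by (intro DERIV_diff Hder DERIV_cdivide DERIV_ident[THEN DERIV_cdivide, of _ "\<phi> v", simplified]) auto
    moreover have "1 / \<phi> v \<le> 1 / \<phi> x"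
      using mono[of x v] pos[of x] x p by (intro divide_left_mono) auto
    ultimately show "\<exists>y. ((\<lambda>u. H u - u / \<phi> v) has_real_derivative y) (at x) \<and> 0 \<le> y"
      by (intro exI conjI) auto
  next
    show "continuous_on {p..v} (\<lambda>u. H u - u / \<phi> v)"
      using pos_ne[of v] p pv by (intro continuous_intros HcontI p) auto
  qed
  then show ?thesis by (simp add: diff_divide_distrib)
qed

lemma Hex: assumes t: "0 \<le> t" shows "\<exists>v\<ge>1. H v = t"
proof -
  define b where "b = exp (K * t)"
  have b1: "1 \<le> b" unfolding b_def using K_pos t by simp
  have "t = ln b / K" unfolding b_def using K_pos by simp
  also have "\<dots> \<le> H b" by (rule Hlow[OF b1])
  finally have "t \<le> H b" .
  then have "\<exists>x. 1 \<le> x \<and> x \<le> b \<and> H x = t"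
    using H1 t b1 by (intro IVT' HcontI) auto
  then show ?thesis by auto
qed

lemma Huniq: "1 \<le> a \<Longrightarrow> 1 \<le> b \<Longrightarrow> H a = H b \<Longrightarrow> a = b"
  using Hstrict[of a b] Hstrict[of b a] by (cases a b rule: linorder_cases) auto

lemma G: assumes "0 \<le> t" shows "1 \<le> G t" "H (G t) = t"
proof -
  have "\<exists>!v. 1 \<le> v \<and> H v = t" using Hex[OF assms] Huniq by blast
  then have "1 \<le> G t \<and> H (G t) = t"
    unfolding H_phi_inv_def by (rule theI')
  then show "1 \<le> G t" "H (G t) = t" by auto
qed

lemma GH: assumes "1 \<le> v" shows "G (H v) = v"
  using G[OF Hnonneg[OF assms]] Huniq assms by metis

lemma G0: "G 0 = 1" using GH[of 1] H1 by simp

lemma Gstrict: assumes "0 \<le> s" "s < t" shows "G s < G t"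
proof (rule ccontr)
  assume "\<not> G s < G t"
  then have "G t \<le> G s" by simp
  then have "H (G t) \<le> H (G s)" using G[of t] assms by (intro Hmono) auto
  then show False using G[of s] G[of t] assms by simp
qed

lemma Gmono: "0 \<le> s \<Longrightarrow> s \<le> t \<Longrightarrow> G s \<le> G t"
  using Gstrict[of s t] by (cases "s = t") auto

lemma Gpos: "0 < t \<Longrightarrow> 1 < G t"
  using Gstrict[of 0 t] G0 by simp

lemma Gcont: assumes T: "0 \<le> T" shows "continuous_on {0..T} G"
proof -
  have "continuous_on (H ` {1..G T}) G"
    by (rule continuous_on_inv[OF Hcont]) (auto intro: GH)
  moreover have "H ` {1..G T} = {0..T}"
  proof
    show "H ` {1..G T} \<subseteq> {0..T}"
    proof
      fix y assume "y \<in> H ` {1..G T}"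
      then obtain x where x: "1 \<le> x" "x \<le> G T" "y = H x" by auto
      then have "H x \<le> H (G T)" by (intro Hmono) auto
      then show "y \<in> {0..T}" using x Hnonneg[of x] G[OF T] by simp
    qed
    show "{0..T} \<subseteq> H ` {1..G T}"
    proof
      fix y assume y: "y \<in> {0..T}"
      then have "G y \<in> {1..G T}" using G[of y] Gmono[of y T] by auto
      moreover have "H (G y) = y" using G[of y] y by simp
      ultimately show "y \<in> H ` {1..G T}" by (metis image_eqI)
    qed
  qed
  ultimately show ?thesis by simp
qed

lemma GcontI: assumes "0 \<le> a" shows "continuous_on {a..b} G"
proof (cases "a \<le> b")
  case True
  then show ?thesis using assms by (intro continuous_on_subset[OF Gcont[of b]]) auto
qed simp

lemma Gder: assumes t: "0 < t" shows "(G has_real_derivative \<phi> (G t)) (at t)"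
proof -
  have "(G has_real_derivative inverse (1 / \<phi> (G t))) (at t)"
  proof (rule DERIV_inverse_function[where f=H and a=0 and b="t+1"])
    show "(H has_real_derivative 1 / \<phi> (G t)) (at (G t))" using Hder Gpos t by blast
    show "1 / \<phi> (G t) \<noteq> 0" using pos_ne G[of t] t by simp
    show "\<And>y. 0 < y \<Longrightarrow> y < t + 1 \<Longrightarrow> H (G y) = y" using G by simp
    have "continuous_on {0..t+1} G" using Gcont[of "t+1"] t by simp
    then show "isCont G t"
      by (rule continuous_on_interior) (use t in simp)
  qed (use t in auto)
  then show ?thesis by simp
qed


lemma phiG_pos: "0 \<le> t \<Longrightarrow> 0 < \<phi> (G t)"
  using pos G by blast

definition psi where "psi s = ln (\<phi> (G s))"

lemma psi_der: assumes s: "0 < s" shows "(psi has_real_derivative deriv \<phi> (G s)) (at s)"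
proof -
  have d1: "((\<lambda>s. \<phi> (G s)) has_real_derivative deriv \<phi> (G s) * \<phi> (G s)) (at s)"
    by (rule DERIV_chain2[OF der Gder[OF s]]) (rule Gpos[OF s])
  have "((\<lambda>s. ln (\<phi> (G s))) has_real_derivative (1 / \<phi> (G s)) * (deriv \<phi> (G s) * \<phi> (G s))) (at s)"
    by (rule DERIV_chain2[OF DERIV_ln_divide d1]) (use phiG_pos s in simp)
  moreover have "(1 / \<phi> (G s)) * (deriv \<phi> (G s) * \<phi> (G s)) = deriv \<phi> (G s)"
    using phiG_pos[of s] s by simp
  ultimately show ?thesis unfolding psi_def[abs_def] by simp
qed

lemma psi_cont: assumes "0 \<le> a" shows "continuous_on {a..b} psi"
proof -
  have "continuous_on {a..b} (\<lambda>s. \<phi> (G s))"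
    by (rule continuous_on_compose2[OF cont GcontI[OF assms]]) (use G assms in auto)
  moreover have "\<forall>s\<in>{a..b}. \<phi> (G s) \<noteq> 0"
  proof
    fix s assume "s \<in> {a..b}"
    then have "0 \<le> s" using assms by simp
    then show "\<phi> (G s) \<noteq> 0" using phiG_pos[of s] by simp
  qed
  ultimately show ?thesis unfolding psi_def[abs_def]
    by (rule continuous_on_ln)
qed

lemma psiD: assumes s1: "0 \<le> s1" and s12: "s1 \<le> s2" and t: "0 \<le> t"
  shows "psi (s2 + t) - psi s2 \<le> psi (s1 + t) - psi s1"
proof -
  have "(\<lambda>s. psi (s + t) - psi s) s2 \<le> (\<lambda>s. psi (s + t) - psi s) s1"
  proof (rule DERIV_nonpos_imp_decreasing_open[OF s12])
    fix x assume x: "s1 < x" "x < s2"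
    then have x0: "0 < x" using s1 by simp
    have "((\<lambda>s. psi (s + t)) has_real_derivative deriv \<phi> (G (x + t))) (at x)"
      using psi_der[of "x + t"] x0 t DERIV_shift[of psi "deriv \<phi> (G (x + t))" x t] by simp
    then have "((\<lambda>s. psi (s + t) - psi s) has_real_derivative deriv \<phi> (G (x + t)) - deriv \<phi> (G x)) (at x)"
      by (intro DERIV_diff psi_der x0)
    moreover have "deriv \<phi> (G (x + t)) \<le> deriv \<phi> (G x)"
      by (rule der_antimono) (use Gpos[OF x0] Gmono[of x "x + t"] x0 t in auto)
    ultimately show "\<exists>y. ((\<lambda>s. psi (s + t) - psi s) has_real_derivative y) (at x) \<and> y \<le> 0"
      by (intro exI conjI) auto
  next
    have "continuous_on {s1..s2} (\<lambda>s. psi (s + t))"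
      by (rule continuous_on_compose2[OF psi_cont[of s1 "s2 + t"]]) (use s1 t in \<open>auto intro!: continuous_intros\<close>)
    then show "continuous_on {s1..s2} (\<lambda>s. psi (s + t) - psi s)"
      by (intro continuous_intros psi_cont s1)
  qed
  then show ?thesis by simp
qed

lemma ratio: assumes s1: "0 \<le> s1" and s12: "s1 \<le> s2" and t: "0 \<le> t"
  shows "\<phi> (G (s2 + t)) * \<phi> (G s1) \<le> \<phi> (G (s1 + t)) * \<phi> (G s2)"
proof -
  have p: "0 < \<phi> (G (s2 + t))" "0 < \<phi> (G s1)" "0 < \<phi> (G (s1 + t))" "0 < \<phi> (G s2)"
    using phiG_pos s1 s12 t by auto
  have "ln (\<phi> (G (s2 + t))) + ln (\<phi> (G s1)) \<le> ln (\<phi> (G (s1 + t))) + ln (\<phi> (G s2))"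
    using psiD[OF assms] unfolding psi_def by simp
  then have "ln (\<phi> (G (s2 + t)) * \<phi> (G s1)) \<le> ln (\<phi> (G (s1 + t)) * \<phi> (G s2))"
    using p by (simp add: ln_mult)
  then show ?thesis using p by simp
qed

lemma Gstep: assumes n: "0 \<le> n" shows "\<phi> (G n) \<le> G (n + 1) - G n"
proof -
  have "(\<lambda>s. G s - s * \<phi> (G n)) n \<le> (\<lambda>s. G s - s * \<phi> (G n)) (n + 1)"
  proof (rule DERIV_nonneg_imp_increasing_open[where f="\<lambda>s. G s - s * \<phi> (G n)" and a=n and b="n+1"])
    fix x assume x: "n < x" "x < n + 1"
    have "((\<lambda>s. G s - s * \<phi> (G n)) has_real_derivative \<phi> (G x) - 1 * \<phi> (G n)) (at x)"
      using x n by (intro DERIV_diff Gder DERIV_cmult_right DERIV_ident) auto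
    moreover have "\<phi> (G n) \<le> \<phi> (G x)"
      using G[OF n] Gmono[of n x] x n by (intro mono) auto
    ultimately show "\<exists>y. ((\<lambda>s. G s - s * \<phi> (G n)) has_real_derivative y) (at x) \<and> 0 \<le> y"
      by (intro exI conjI) auto
  next
    show "continuous_on {n..n + 1} (\<lambda>s. G s - s * \<phi> (G n))"
      by (intro continuous_intros GcontI n)
  qed simp
  then show ?thesis by (simp add: algebra_simps)
qed

definition Zd where "Zd t u = \<phi> (G (H u + t)) / \<phi> u"

lemma Z_der: assumes u: "1 < u" and t: "0 \<le> t"
  shows "((\<lambda>u. G (H u + t)) has_real_derivative Zd t u) (at u)"
proof -
  have hp: "0 < H u + t" using Hpos[OF u] t by simp
  have dH: "((\<lambda>u. H u + t) has_real_derivative 1 / \<phi> u) (at u)"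
    using DERIV_add[OF Hder[OF u] DERIV_const[of t]] by simp
  have "((\<lambda>u. G (H u + t)) has_real_derivative \<phi> (G (H u + t)) * (1 / \<phi> u)) (at u)"
    by (rule DERIV_chain2[where f=G and g="\<lambda>u. H u + t", OF Gder[OF hp] dH])
  then show ?thesis unfolding Zd_def by simp
qed

lemma Zd_anti: assumes u1: "1 \<le> u1" and u12: "u1 \<le> u2" and t: "0 \<le> t"
  shows "Zd t u2 \<le> Zd t u1"
proof -
  have "\<phi> (G (H u2 + t)) * \<phi> (G (H u1)) \<le> \<phi> (G (H u1 + t)) * \<phi> (G (H u2))"
    by (rule ratio) (use Hnonneg Hmono u1 u12 t in auto)
  then have "\<phi> (G (H u2 + t)) * \<phi> u1 \<le> \<phi> (G (H u1 + t)) * \<phi> u2"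
    using GH u1 u12 by simp
  then show ?thesis unfolding Zd_def
    using pos[of u1] pos[of u2] u1 u12 by (simp add: divide_simps mult.commute)
qed

lemma Zd_nonneg: "1 \<le> u \<Longrightarrow> 0 \<le> t \<Longrightarrow> 0 \<le> Zd t u"
  unfolding Zd_def using pos[of u] phiG_pos[of "H u + t"] Hnonneg[of u] by simp

lemma Z_cont: assumes a: "1 \<le> a" and t: "0 \<le> t" shows "continuous_on {a..b} (\<lambda>u. G (H u + t))"
proof (rule continuous_on_compose2[OF GcontI[of 0 "H b + t"]])
  show "continuous_on {a..b} (\<lambda>u. H u + t)" by (intro continuous_intros HcontI a)
  show "(\<lambda>u. H u + t) ` {a..b} \<subseteq> {0..H b + t}"
    using Hnonneg Hmono a t by force
qed simp

lemma Z_tangent: assumes p: "1 \<le> p" and v: "1 \<le> v" and t: "0 \<le> t"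
  shows "G (H v + t) \<le> G (H p + t) + Zd t p * (v - p)"
proof (cases "p \<le> v")
  case True
  have "(\<lambda>u. G (H u + t) - Zd t p * u) v \<le> (\<lambda>u. G (H u + t) - Zd t p * u) p"
  proof (rule DERIV_nonpos_imp_decreasing_open[OF True])
    fix x assume x: "p < x" "x < v"
    have "((\<lambda>u. G (H u + t) - Zd t p * u) has_real_derivative Zd t x - Zd t p * 1) (at x)"
      using x p t by (intro DERIV_diff Z_der DERIV_cmult DERIV_ident) auto
    moreover have "Zd t x \<le> Zd t p" using Zd_anti[of p x t] x p t by simp
    ultimately show "\<exists>y. ((\<lambda>u. G (H u + t) - Zd t p * u) has_real_derivative y) (at x) \<and> y \<le> 0"
      by (intro exI conjI) auto
  next
    show "continuous_on {p..v} (\<lambda>u. G (H u + t) - Zd t p * u)"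
      by (intro continuous_intros Z_cont p t)
  qed
  then show ?thesis by (simp add: algebra_simps)
next
  case False
  then have vp: "v \<le> p" by simp
  have "(\<lambda>u. G (H u + t) - Zd t p * u) v \<le> (\<lambda>u. G (H u + t) - Zd t p * u) p"
  proof (rule DERIV_nonneg_imp_increasing_open[OF vp])
    fix x assume x: "v < x" "x < p"
    have "((\<lambda>u. G (H u + t) - Zd t p * u) has_real_derivative Zd t x - Zd t p * 1) (at x)"
      using x v t by (intro DERIV_diff Z_der DERIV_cmult DERIV_ident) auto
    moreover have "Zd t p \<le> Zd t x" using Zd_anti[of x p t] x v t by simp
    ultimately show "\<exists>y. ((\<lambda>u. G (H u + t) - Zd t p * u) has_real_derivative y) (at x) \<and> 0 \<le> y"
      by (intro exI conjI) auto
  next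
    show "continuous_on {v..p} (\<lambda>u. G (H u + t) - Zd t p * u)"
      by (intro continuous_intros Z_cont v t)
  qed
  then show ?thesis by (simp add: algebra_simps)
qed


lemma r_eq: "r_phi \<phi> k = \<phi> (G (real k)) / \<phi> 1"
  unfolding r_phi_def using G0 by simp

lemma r0: "r_phi \<phi> 0 = 1"
  unfolding r_eq using G0 pos[of 1] by simp

lemma c_nonneg: "0 \<le> r_phi \<phi> 1 / \<phi> 1"
  unfolding r_eq using phiG_pos[of 1] pos[of 1] by simp

lemma r_step: "r_phi \<phi> (Suc n) \<le> (r_phi \<phi> 1 / \<phi> 1) * (G (real n + 1) - G (real n))"
proof -
  have rat: "\<phi> (G (real n + 1)) * \<phi> (G 0) \<le> \<phi> (G (0 + 1)) * \<phi> (G (real n))"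
    by (rule ratio) auto
  have gs: "\<phi> (G (real n)) \<le> G (real n + 1) - G (real n)" by (rule Gstep) simp
  have p1: "0 < \<phi> 1" using pos[of 1] by simp
  have pG1: "0 < \<phi> (G 1)" using phiG_pos[of 1] by simp
  have "r_phi \<phi> (Suc n) = \<phi> (G (real n + 1)) / \<phi> 1" by (simp add: r_eq add.commute)
  also have "\<dots> \<le> \<phi> (G 1) * \<phi> (G (real n)) / (\<phi> 1 * \<phi> 1)"
    using rat G0 p1 by (simp add: divide_simps mult.commute)
  also have "\<dots> = (r_phi \<phi> 1 / \<phi> 1) * \<phi> (G (real n))" by (simp add: r_eq)
  also have "\<dots> \<le> (r_phi \<phi> 1 / \<phi> 1) * (G (real n + 1) - G (real n))"
    by (rule mult_left_mono[OF gs c_nonneg])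
  finally show ?thesis .
qed

lemma Ustep: assumes w: "1 \<le> w" and p: "1 \<le> w - \<phi> w"
  shows "r_phi \<phi> (Suc n) + (r_phi \<phi> 1 / \<phi> 1) * (G (H (w - \<phi> w) + (real n + 1)) - G (real n + 1))
     \<le> (r_phi \<phi> 1 / \<phi> 1) * (G (H w + real n) - G (real n))"
proof -
  define c where "c = r_phi \<phi> 1 / \<phi> 1"
  have c0: "0 \<le> c" unfolding c_def by (rule c_nonneg)
  have pw: "w - \<phi> w \<le> w" using pos[OF w] by simp
  have "(w - (w - \<phi> w)) / \<phi> w \<le> H w - H (w - \<phi> w)" by (rule Hgap[OF p pw])
  then have gap: "1 \<le> H w - H (w - \<phi> w)" using pos[OF w] by simp
  have "G (H (w - \<phi> w) + (real n + 1)) \<le> G (H w + real n)"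
    using gap Hnonneg[OF p] by (intro Gmono) auto
  then have "c * (G (H (w - \<phi> w) + (real n + 1)) - G (real n + 1)) \<le> c * (G (H w + real n) - G (real n + 1))"
    by (intro mult_left_mono c0) simp
  moreover have "r_phi \<phi> (Suc n) \<le> c * (G (real n + 1) - G (real n))" unfolding c_def by (rule r_step)
  ultimately have "r_phi \<phi> (Suc n) + c * (G (H (w - \<phi> w) + (real n + 1)) - G (real n + 1))
     \<le> c * (G (real n + 1) - G (real n)) + c * (G (H w + real n) - G (real n + 1))" by simp
  also have "\<dots> = c * (G (H w + real n) - G (real n))" by (simp add: algebra_simps)
  finally show ?thesis unfolding c_def .
qed

end


lemma lin_int:
  fixes N :: "'a measure"
  assumes N: "prob_space N" and Wm: "W \<in> borel_measurable N" and W0: "\<And>y. 0 \<le> W y"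
    and Wq: "(\<integral>\<^sup>+y. ennreal (W y) \<partial>N) = ennreal q" and q: "0 \<le> q"
    and ab: "\<And>y. 0 \<le> a + b * W y"
  shows "(\<integral>\<^sup>+y. ennreal (a + b * W y) \<partial>N) = ennreal (a + b * q)"
proof -
  interpret prob_space N by (rule N)
  have iW: "integrable N W" by (rule integrableI_nn_integral_finite[OF Wm _ Wq]) (simp add: W0)
  have "integral\<^sup>L N W = enn2real (\<integral>\<^sup>+y. ennreal (W y) \<partial>N)"
    by (rule integral_eq_nn_integral[OF Wm]) (simp add: W0)
  then have intW: "integral\<^sup>L N W = q" using Wq q by simp
  have i2: "integrable N (\<lambda>y. a + b * W y)" using iW by simp
  have "(\<integral>\<^sup>+y. ennreal (a + b * W y) \<partial>N) = ennreal (integral\<^sup>L N (\<lambda>y. a + b * W y))"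
    by (rule nn_integral_eq_integral[OF i2]) (simp add: ab)
  also have "integral\<^sup>L N (\<lambda>y. a + b * W y) = a + b * q"
    using iW intW by (simp add: integral_add prob_space)
  finally show ?thesis .
qed

lemma Q_decomp:
  fixes M :: "'a measure" and P :: "'a \<Rightarrow> 'a measure"
  assumes Pp: "prob_space (P x)" "sets (P x) = sets M"
    and nup: "prob_space \<nu>" "sets \<nu> = sets M"
    and e0: "0 < \<epsilon>" and e1: "\<epsilon> < 1"
    and minor: "\<forall>A\<in>sets M. \<epsilon> * measure \<nu> A \<le> measure (P x) A"
  shows "prob_space (residual_kernel M P \<nu> \<epsilon> x)" "sets (residual_kernel M P \<nu> \<epsilon> x) = sets M"
    "\<And>f. f \<in> borel_measurable M \<Longrightarrow> (\<integral>\<^sup>+y. f y \<partial>P x) =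
        ennreal (1 - \<epsilon>) * (\<integral>\<^sup>+y. f y \<partial>residual_kernel M P \<nu> \<epsilon> x) + ennreal \<epsilon> * (\<integral>\<^sup>+y. f y \<partial>\<nu>)"
proof -
  interpret Px: prob_space "P x" by (rule Pp(1))
  interpret nu: prob_space \<nu> by (rule nup(1))
  define S where "S = scale_measure (ennreal \<epsilon>) \<nu>"
  define D where "D = diff_measure (P x) S"
  have sS: "sets S = sets M" unfolding S_def using nup by simp
  have fS: "finite_measure S" unfolding S_def
    by (rule finite_measureI) (simp add: space_scale_measure ennreal_mult_eq_top_iff)
  have posS: "emeasure S A \<le> emeasure (P x) A" if A: "A \<in> sets (P x)" for A
  proof -
    have "emeasure S A = ennreal \<epsilon> * ennreal (measure \<nu> A)"
      unfolding S_def by (simp add: nu.emeasure_eq_measure)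
    also have "\<dots> = ennreal (\<epsilon> * measure \<nu> A)" using e0 by (simp add: ennreal_mult)
    also have "\<dots> \<le> ennreal (measure (P x) A)" using minor A Pp(2) by (intro ennreal_leI) auto
    also have "\<dots> = emeasure (P x) A" by (simp add: Px.emeasure_eq_measure)
    finally show ?thesis .
  qed
  have eD: "emeasure D A = emeasure (P x) A - emeasure S A" if "A \<in> sets (P x)" for A
    unfolding D_def
    by (rule emeasure_diff_measure[OF Px.finite_measure_axioms fS]) (use that posS sS Pp(2) in auto)
  have sD: "sets D = sets M" "space D = space M"
    unfolding D_def using Pp(2) sets_eq_imp_space_eq by auto
  have Qeq: "residual_kernel M P \<nu> \<epsilon> x = scale_measure (ennreal (1 / (1 - \<epsilon>))) D"
  proof -
    have "residual_kernel M P \<nu> \<epsilon> x = measure_of (space M) (sets M)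
        (\<lambda>A. (emeasure (P x) A - ennreal \<epsilon> * emeasure \<nu> A) / ennreal (1 - \<epsilon>))"
      unfolding residual_kernel_def using e1 by simp
    also have "\<dots> = measure_of (space M) (sets M) (\<lambda>A. ennreal (1 / (1 - \<epsilon>)) * emeasure D A)"
    proof (rule measure_of_eq)
      show "sets M \<subseteq> Pow (space M)" by (rule sets.space_closed)
      fix a assume "a \<in> sigma_sets (space M) (sets M)"
      then have a: "a \<in> sets (P x)" using Pp(2) by (simp add: sets.sigma_sets_eq)
      have "(emeasure (P x) a - ennreal \<epsilon> * emeasure \<nu> a) / ennreal (1 - \<epsilon>)
          = (emeasure (P x) a - ennreal \<epsilon> * emeasure \<nu> a) * ennreal (1 / (1 - \<epsilon>))"
        using e1 by (simp add: divide_ennreal_def inverse_ennreal inverse_eq_divide)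
      also have "\<dots> = ennreal (1 / (1 - \<epsilon>)) * emeasure D a"
        using eD[OF a] by (simp add: S_def mult.commute)
      finally show "(emeasure (P x) a - ennreal \<epsilon> * emeasure \<nu> a) / ennreal (1 - \<epsilon>) =
          ennreal (1 / (1 - \<epsilon>)) * emeasure D a" .
    qed
    also have "\<dots> = scale_measure (ennreal (1 / (1 - \<epsilon>))) D"
      unfolding scale_measure_def using sD by simp
    finally show ?thesis .
  qed
  show sQ: "sets (residual_kernel M P \<nu> \<epsilon> x) = sets M" unfolding Qeq using sD by simp
  have lc: "(\<integral>\<^sup>+y. f y \<partial>P x) = (\<integral>\<^sup>+y. f y \<partial>D) + (\<integral>\<^sup>+y. f y \<partial>S)"
    if f: "f \<in> borel_measurable M" for f
  proof (rule nn_integral_lincomb[OF Pp(2) sD(1) sS _ f])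
    fix A assume "A \<in> sets M"
    then have A: "A \<in> sets (P x)" using Pp(2) by simp
    show "emeasure (P x) A = emeasure D A + emeasure S A"
      using eD[OF A] posS[OF A] by (simp add: diff_add_cancel_ennreal)
  qed
  show "(\<integral>\<^sup>+y. f y \<partial>P x) =
        ennreal (1 - \<epsilon>) * (\<integral>\<^sup>+y. f y \<partial>residual_kernel M P \<nu> \<epsilon> x) + ennreal \<epsilon> * (\<integral>\<^sup>+y. f y \<partial>\<nu>)"
    if f: "f \<in> borel_measurable M" for f
  proof -
    have fD: "f \<in> borel_measurable D" using f sD by (simp add: measurable_cong_sets[OF sD(1) refl])
    have fn: "f \<in> borel_measurable \<nu>" using f nup by (simp add: measurable_cong_sets[OF nup(2) refl])
    have "ennreal (1 - \<epsilon>) * (\<integral>\<^sup>+y. f y \<partial>residual_kernel M P \<nu> \<epsilon> x)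
        = ennreal (1 - \<epsilon>) * (ennreal (1 / (1 - \<epsilon>)) * (\<integral>\<^sup>+y. f y \<partial>D))"
      unfolding Qeq by (simp add: nn_integral_scale_measure[OF fD])
    also have "\<dots> = (\<integral>\<^sup>+y. f y \<partial>D)"
      using e1 by (simp add: ennreal_mult[symmetric] mult.assoc[symmetric])
    finally have 1: "ennreal (1 - \<epsilon>) * (\<integral>\<^sup>+y. f y \<partial>residual_kernel M P \<nu> \<epsilon> x) = (\<integral>\<^sup>+y. f y \<partial>D)" .
    have 2: "(\<integral>\<^sup>+y. f y \<partial>S) = ennreal \<epsilon> * (\<integral>\<^sup>+y. f y \<partial>\<nu>)"
      unfolding S_def by (rule nn_integral_scale_measure[OF fn])
    show ?thesis using lc[OF f] 1 2 by simp
  qed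
  show "prob_space (residual_kernel M P \<nu> \<epsilon> x)"
  proof (rule prob_spaceI)
    have spQ: "space (residual_kernel M P \<nu> \<epsilon> x) = space M"
      using sQ sets_eq_imp_space_eq by blast
    have "emeasure D (space M) = ennreal (1 - \<epsilon>)"
    proof -
      have a: "space M \<in> sets (P x)" using Pp(2) by (metis sets.top)
      have spx: "space (P x) = space M" using Pp(2) sets_eq_imp_space_eq by metis
      have spn: "space \<nu> = space M" using nup(2) sets_eq_imp_space_eq by metis
      have e1': "emeasure (P x) (space M) = 1" using Px.emeasure_space_1 spx by simp
      have e2': "emeasure \<nu> (space M) = 1" using nu.emeasure_space_1 spn by simp
      have "emeasure D (space M) = 1 - ennreal \<epsilon> * 1"
        using eD[OF a] e1' e2' by (simp add: S_def)
      also have "\<dots> = ennreal (1 - \<epsilon>)" using e0 ennreal_minus[of \<epsilon> 1] by simp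
      finally show ?thesis .
    qed
    then show "emeasure (residual_kernel M P \<nu> \<epsilon> x) (space (residual_kernel M P \<nu> \<epsilon> x)) = 1"
      unfolding spQ unfolding Qeq using e1 sD
      by (simp add: ennreal_mult[symmetric])
  qed
qed

theorem theorem5:
  fixes M :: "('a::linorder) measure"
    and P :: "'a \<Rightarrow> 'a measure"
    and \<nu> :: "'a measure"
    and \<epsilon> :: real
    and x0 :: 'a
    and W0 :: "'a \<Rightarrow> real"
    and phi :: "real \<Rightarrow> real"
    and C :: "'a set"
  defines "Q \<equiv> residual_kernel M P \<nu> \<epsilon>"
    and "U0 \<equiv> exp_sum_to_hit M P C (\<lambda>k y. ennreal (r_phi phi k))"
    and "V0 \<equiv> exp_sum_to_hit M P C (\<lambda>k y. ennreal (phi (W0 y)))"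
  assumes C_def: "C = {..x0}"
    and space_M: "space M = UNIV"
    and half_lines: "\<forall>a. {..a} \<in> sets M"
    and kernel: "P \<in> M \<rightarrow>\<^sub>M prob_algebra M"
    and monotone: "stoch_monotone M P"
    and eps_pos: "\<epsilon> > 0"
    and nu_prob: "\<nu> \<in> space (prob_algebra M)"
    and minor: "\<forall>x\<in>C. \<forall>A\<in>sets M. \<epsilon> * measure \<nu> A \<le> measure (P x) A"
    and W0_meas: "W0 \<in> borel_measurable M"
    and W0_ge: "\<forall>x. 1 \<le> W0 x"
    and phi_C: "phi_class phi"
    and drift: "\<forall>x. x \<notin> C \<longrightarrow>
                   (\<integral>\<^sup>+ y. ennreal (W0 y) \<partial>P x) \<le> ennreal (W0 x - phi (W0 x))"
    and sup_PW0: "(SUP x\<in>C. \<integral>\<^sup>+ y. ennreal (W0 y) \<partial>P x) < \<infinity>"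
  shows "(\<forall>x. U0 x < \<infinity>) \<and> (\<forall>x. V0 x < \<infinity>)
    \<and> (SUP x\<in>C. \<integral>\<^sup>+ y. U0 y \<partial>Q x) < \<infinity>
    \<and> (SUP x\<in>C. \<integral>\<^sup>+ y. V0 y \<partial>Q x) < \<infinity>
    \<and> (\<forall>x. U0 x \<le> ennreal (1 + r_phi phi 1 / phi 1 * (W0 x - 1) * indicator (- C) x))
    \<and> (\<forall>x. V0 x \<le> (SUP y\<in>C. ennreal (phi (W0 y))) + ennreal (W0 x * indicator (- C) x))
    \<and> (\<epsilon> < 1 \<longrightarrow>
         (let b = (enn2real (SUP x\<in>C. \<integral>\<^sup>+ y. ennreal (W0 y) \<partial>P x)
                   - \<epsilon> * enn2real (\<integral>\<^sup>+ y. ennreal (W0 y) \<partial>\<nu>)) / (1 - \<epsilon>)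
          in (SUP x\<in>C. \<integral>\<^sup>+ y. U0 y \<partial>Q x) \<le> ennreal (1 + r_phi phi 1 / phi 1 * (b - 1))
           \<and> (SUP x\<in>C. \<integral>\<^sup>+ y. V0 y \<partial>Q x) \<le> (SUP y\<in>C. ennreal (phi (W0 y))) + ennreal b))"
proof -
  interpret phiC phi using phi_C by unfold_locales
  have Cm[measurable]: "C \<in> sets M" using half_lines C_def by simp
  have Pp: "prob_space (P y)" "sets (P y) = sets M" for y
    using measurable_space[OF kernel, of y] space_M by (auto simp: space_prob_algebra)
  have nup: "prob_space \<nu>" "sets \<nu> = sets M" using nu_prob by (auto simp: space_prob_algebra)
  have W0m[measurable]: "W0 \<in> borel_measurable M" by (rule W0_meas)
  have PM: "f \<in> borel_measurable (P y)" if "f \<in> borel_measurable M" for f y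
    unfolding measurable_cong_sets[OF Pp(2)[of y] refl] by (rule that)
  have nuM: "f \<in> borel_measurable \<nu>" if "f \<in> borel_measurable M" for f
    unfolding measurable_cong_sets[OF nup(2) refl] by (rule that)
  have spP: "space (P y) = UNIV" for y using Pp(2)[of y] space_M sets_eq_imp_space_eq by metis
  have P1: "emeasure (P y) UNIV = 1" for y using prob_space.emeasure_space_1[OF Pp(1)[of y]] spP[of y] by simp
  define I where "I y = (\<integral>\<^sup>+z. ennreal (W0 z) \<partial>P y)" for y
  have I_ge1: "1 \<le> I y" for y
  proof -
    have "(\<integral>\<^sup>+z. 1 \<partial>P y) \<le> I y" unfolding I_def using W0_ge by (intro nn_integral_mono) simp
    then show ?thesis using P1[of y] spP[of y] by simp
  qed
  have drift_r: "1 \<le> W0 y - phi (W0 y)" "I y \<le> ennreal (W0 y - phi (W0 y))" if y: "y \<notin> C" for y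
  proof -
    show I: "I y \<le> ennreal (W0 y - phi (W0 y))" using drift y unfolding I_def by blast
    have h: "ennreal 1 \<le> ennreal (W0 y - phi (W0 y))" using order_trans[OF I_ge1[of y] I] by simp
    show "1 \<le> W0 y - phi (W0 y)"
    proof (cases "0 \<le> W0 y - phi (W0 y)")
      case True
      then show ?thesis using h ennreal_le_iff by blast
    next
      case False
      then have "ennreal (W0 y - phi (W0 y)) = 0" by (simp add: ennreal_neg)
      then show ?thesis using h by simp
    qed
  qed
  have Ifin: "I y = ennreal (enn2real (I y))" "enn2real (I y) \<le> W0 y - phi (W0 y)" if y: "y \<notin> C" for y
  proof -
    have "I y < \<infinity>" using drift_r(2)[OF y] by (simp add: le_less_trans)
    then show "I y = ennreal (enn2real (I y))" by simp
    then have "ennreal (enn2real (I y)) \<le> ennreal (W0 y - phi (W0 y))" using drift_r(2)[OF y] by simp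
    moreover have "0 \<le> W0 y - phi (W0 y)" using drift_r(1)[OF y] by simp
    ultimately show "enn2real (I y) \<le> W0 y - phi (W0 y)" by (simp add: ennreal_le_iff)
  qed
  have phiW_pos: "0 < phi (W0 y)" for y using pos W0_ge by blast
  have phiW_meas[measurable]: "(\<lambda>y. phi (W0 y)) \<in> borel_measurable M"
  proof -
    have "mono (\<lambda>v. phi (max 1 v))" by (rule monoI) (auto intro!: mono simp: max_def)
    then have "(\<lambda>v. phi (max 1 v)) \<in> borel_measurable borel" by (rule borel_measurable_mono)
    then have "(\<lambda>y. phi (max 1 (W0 y))) \<in> borel_measurable M" by (rule measurable_compose[OF W0m])
    moreover have "max 1 (W0 y) = W0 y" for y using W0_ge by simp
    ultimately show ?thesis by simp
  qed
  have Ssum_eq: "exp_sum_to_hit M P C f x = (SUP n. \<integral>\<^sup>+\<omega>. Ssum C f n \<omega> \<partial>chain_path M P x n)" for f x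
    unfolding exp_sum_to_hit_def Ssum_def ..
  define c where "c = r_phi phi 1 / phi 1"
  have c0: "0 \<le> c" unfolding c_def by (rule c_nonneg)
  have r_nn: "0 \<le> r_phi phi k" for k unfolding r_eq using phiG_pos[of k] pos[of 1] by simp
  have Fm[measurable]: "(\<lambda>y. H_phi_inv phi (H_phi phi (W0 y) + t)) \<in> borel_measurable M" if t: "0 \<le> t" for t
  proof -
    have "mono (\<lambda>v. H_phi_inv phi (H_phi phi (max 1 v) + t))"
    proof (rule monoI)
      fix v v' :: real assume "v \<le> v'"
      then have "H_phi phi (max 1 v) \<le> H_phi phi (max 1 v')" by (intro Hmono) auto
      then show "H_phi_inv phi (H_phi phi (max 1 v) + t) \<le> H_phi_inv phi (H_phi phi (max 1 v') + t)"
        using Hnonneg[of "max 1 v"] t by (intro Gmono) auto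
    qed
    then have "(\<lambda>v. H_phi_inv phi (H_phi phi (max 1 v) + t)) \<in> borel_measurable borel" by (rule borel_measurable_mono)
    then have "(\<lambda>y. H_phi_inv phi (H_phi phi (max 1 (W0 y)) + t)) \<in> borel_measurable M" by (rule measurable_compose[OF W0m])
    moreover have "max 1 (W0 y) = W0 y" for y using W0_ge by simp
    ultimately show ?thesis by simp
  qed
  have UB: "U0 x \<le> ennreal (1 + c * (W0 x - 1) * indicator (- C) x)" for x
  proof -
    define \<Phi> where "\<Phi> n y = ennreal (c * (H_phi_inv phi (H_phi phi (W0 y) + real n) - H_phi_inv phi (real n)))" for n y
    have \<Phi>m: "\<Phi> n \<in> borel_measurable M" for n
    proof -
      have [measurable]: "(\<lambda>y. H_phi_inv phi (H_phi phi (W0 y) + real n)) \<in> borel_measurable M" by (rule Fm) simp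
      show ?thesis unfolding \<Phi>_def[abs_def] by measurable
    qed
    have step: "(\<integral>\<^sup>+y. (ennreal (r_phi phi (Suc n)) + indicator (-C) y * \<Phi> (Suc n) y) \<partial>P y') \<le> \<Phi> n y'"
      if y': "y' \<notin> C" for n y'
    proof -
      define w where "w = W0 y'"
      define p where "p = w - phi w"
      define t where "t = real n + 1"
      have w1: "1 \<le> w" unfolding w_def using W0_ge by simp
      have p1: "1 \<le> p" unfolding p_def w_def using drift_r(1)[OF y'] .
      have t0: "0 \<le> t" unfolding t_def by simp
      define Z where "Z = Zd t p"
      have Z0: "0 \<le> Z" unfolding Z_def by (rule Zd_nonneg[OF p1 t0])
      define r where "r = r_phi phi (Suc n)"
      define a where "a = r + c * (H_phi_inv phi (H_phi phi p + t) - H_phi_inv phi t) - c * Z * p"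
      define bb where "bb = c * Z"
      have bb0: "0 \<le> bb" unfolding bb_def using c0 Z0 by simp
      have pw: "(ennreal r + indicator (-C) y * \<Phi> (Suc n) y) \<le> ennreal (a + bb * W0 y)"
        and ab0: "0 \<le> a + bb * W0 y" for y
      proof -
        define X where "X = c * (H_phi_inv phi (H_phi phi (W0 y) + t) - H_phi_inv phi t)"
        have X0: "0 \<le> X" unfolding X_def using c0 Hnonneg[of "W0 y"] W0_ge t0
          by (intro mult_nonneg_nonneg) (auto intro!: Gmono simp: algebra_simps)
        have PhiX: "\<Phi> (Suc n) y = ennreal X" unfolding \<Phi>_def X_def t_def by (simp add: add.commute)
        have "indicator (-C) y * \<Phi> (Suc n) y \<le> ennreal X"
          unfolding PhiX by (simp add: indicator_def)
        then have "ennreal r + indicator (-C) y * \<Phi> (Suc n) y \<le> ennreal r + ennreal X" by (rule add_left_mono)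
        also have "\<dots> = ennreal (r + X)" using X0 r_nn unfolding r_def by (simp add: ennreal_plus)
        finally have 1: "ennreal r + indicator (-C) y * \<Phi> (Suc n) y \<le> ennreal (r + X)" .
        have "H_phi_inv phi (H_phi phi (W0 y) + t) \<le> H_phi_inv phi (H_phi phi p + t) + Z * (W0 y - p)"
          unfolding Z_def by (rule Z_tangent[OF p1 _ t0]) (use W0_ge in simp)
        then have "c * H_phi_inv phi (H_phi phi (W0 y) + t) \<le> c * (H_phi_inv phi (H_phi phi p + t) + Z * (W0 y - p))"
          by (rule mult_left_mono[OF _ c0])
        then have 2: "r + X \<le> a + bb * W0 y" unfolding X_def a_def bb_def by (simp add: algebra_simps)
        show "ennreal r + indicator (-C) y * \<Phi> (Suc n) y \<le> ennreal (a + bb * W0 y)"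
          using 1 2 by (meson ennreal_leI order_trans)
        show "0 \<le> a + bb * W0 y" using 2 X0 r_nn[of "Suc n"] unfolding r_def by linarith
      qed
      have "(\<integral>\<^sup>+y. (ennreal (r_phi phi (Suc n)) + indicator (-C) y * \<Phi> (Suc n) y) \<partial>P y')
          \<le> (\<integral>\<^sup>+y. ennreal (a + bb * W0 y) \<partial>P y')"
        using pw unfolding r_def by (intro nn_integral_mono) simp
      also have "\<dots> = ennreal (a + bb * enn2real (I y'))"
      proof (rule lin_int[OF Pp(1) PM[OF W0m]])
        show "0 \<le> W0 y" for y using W0_ge[rule_format, of y] by simp
        show "(\<integral>\<^sup>+y. ennreal (W0 y) \<partial>P y') = ennreal (enn2real (I y'))" using Ifin(1)[OF y'] unfolding I_def by simp
      qed (auto intro: ab0)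
      also have "\<dots> \<le> ennreal (a + bb * p)"
        using Ifin(2)[OF y'] bb0 unfolding p_def w_def by (intro ennreal_leI add_left_mono mult_left_mono) auto
      also have "ennreal (a + bb * p) = ennreal (r + c * (H_phi_inv phi (H_phi phi p + t) - H_phi_inv phi t))"
        unfolding a_def bb_def by (simp add: algebra_simps)
      also have "\<dots> \<le> ennreal (c * (H_phi_inv phi (H_phi phi w + real n) - H_phi_inv phi (real n)))"
        using Ustep[OF w1, of n] p1 unfolding r_def p_def t_def c_def by (intro ennreal_leI) simp
      finally show ?thesis unfolding \<Phi>_def w_def .
    qed
    have fm: "(\<lambda>y. ennreal (r_phi phi k)) \<in> borel_measurable M" for k by simp
    have "\<And>n. (\<integral>\<^sup>+\<omega>. Ssum C (\<lambda>k y. ennreal (r_phi phi k)) n \<omega> \<partial>chain_path M P x n)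
        \<le> ennreal (r_phi phi 0) + indicator (-C) x * \<Phi> 0 x"
      by (rule forward[OF space_M kernel Cm fm \<Phi>m]) (rule step)
    then have "U0 x \<le> ennreal (r_phi phi 0) + indicator (-C) x * \<Phi> 0 x"
      unfolding U0_def Ssum_eq by (rule SUP_least)
    also have "\<dots> = ennreal (1 + c * (W0 x - 1) * indicator (- C) x)"
    proof -
      have "\<Phi> 0 x = ennreal (c * (W0 x - 1))" unfolding \<Phi>_def using GH[of "W0 x"] G0 W0_ge by simp
      moreover have "0 \<le> c * (W0 x - 1)" using c0 W0_ge by simp
      ultimately show ?thesis using r0 by (cases "x \<in> C") (auto simp: indicator_def ennreal_plus)
    qed
    finally show ?thesis .
  qed
  define s where "s = (SUP y\<in>C. ennreal (phi (W0 y)))"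
  have fV[measurable]: "(\<lambda>y. ennreal (phi (W0 y))) \<in> borel_measurable M" by measurable
  have VB1: "V0 x \<le> s + ennreal (W0 x * indicator (- C) x)" for x
  proof -
    define \<Phi> where "\<Phi> n y = ennreal (W0 y - phi (W0 y)) + s" for n :: nat and y
    have \<Phi>m: "\<Phi> n \<in> borel_measurable M" for n unfolding \<Phi>_def[abs_def] by measurable
    have sup: "ennreal (phi (W0 y)) \<le> s" if "y \<in> C" for y unfolding s_def using that by (rule SUP_upper)
    have step: "(\<integral>\<^sup>+y. (ennreal (phi (W0 y)) + indicator (-C) y * \<Phi> (Suc n) y) \<partial>P y') \<le> \<Phi> n y'"
      if y': "y' \<notin> C" for n y'
    proof -
      have pw: "ennreal (phi (W0 y)) + indicator (-C) y * \<Phi> (Suc n) y \<le> s + ennreal (W0 y)" for y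
      proof (cases "y \<in> C")
        case True
        then have "ennreal (phi (W0 y)) + indicator (-C) y * \<Phi> (Suc n) y = ennreal (phi (W0 y))" by simp
        also have "\<dots> \<le> s" using sup[OF True] .
        also have "s \<le> s + ennreal (W0 y)" by simp
        finally show ?thesis .
      next
        case False
        have "ennreal (phi (W0 y)) + ennreal (W0 y - phi (W0 y)) = ennreal (W0 y)"
          using phiW_pos[of y] drift_r(1)[OF False] by (simp add: ennreal_plus[symmetric])
        then show ?thesis using False unfolding \<Phi>_def by (simp add: add.assoc[symmetric] add.commute)
      qed
      have "(\<integral>\<^sup>+y. (ennreal (phi (W0 y)) + indicator (-C) y * \<Phi> (Suc n) y) \<partial>P y')
          \<le> (\<integral>\<^sup>+y. s + ennreal (W0 y) \<partial>P y')"
        using pw by (intro nn_integral_mono) simp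
      also have "\<dots> = (\<integral>\<^sup>+y. s \<partial>P y') + I y'"
        unfolding I_def by (rule nn_integral_add) (auto intro: PM)
      also have "\<dots> = s + I y'" using P1[of y'] spP[of y'] by simp
      also have "\<dots> \<le> s + ennreal (W0 y' - phi (W0 y'))"
        using drift_r(2)[OF y'] by (rule add_left_mono)
      finally show ?thesis unfolding \<Phi>_def by (simp add: add.commute)
    qed
    have "\<And>n. (\<integral>\<^sup>+\<omega>. Ssum C (\<lambda>k y. ennreal (phi (W0 y))) n \<omega> \<partial>chain_path M P x n)
        \<le> ennreal (phi (W0 x)) + indicator (-C) x * \<Phi> 0 x"
      by (rule forward[OF space_M kernel Cm fV \<Phi>m]) (rule step)
    then have "V0 x \<le> ennreal (phi (W0 x)) + indicator (-C) x * \<Phi> 0 x"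
      unfolding V0_def Ssum_eq by (rule SUP_least)
    also have "\<dots> \<le> s + ennreal (W0 x * indicator (- C) x)"
    proof (cases "x \<in> C")
      case True
      then show ?thesis using sup[OF True] by simp
    next
      case False
      have "ennreal (phi (W0 x)) + ennreal (W0 x - phi (W0 x)) = ennreal (W0 x)"
        using phiW_pos[of x] drift_r(1)[OF False] by (simp add: ennreal_plus[symmetric])
      then show ?thesis using False unfolding \<Phi>_def by (simp add: add.assoc[symmetric] add.commute)
    qed
    finally show ?thesis .
  qed
  have VB2: "V0 x \<le> ennreal ((K + 1) * W0 x)" for x
  proof -
    define \<Phi> where "\<Phi> n y = ennreal ((K + 1) * W0 y - phi (W0 y))" for n :: nat and y
    have \<Phi>m: "\<Phi> n \<in> borel_measurable M" for n unfolding \<Phi>_def[abs_def] by measurable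
    have lb: "phi (W0 y) \<le> K * W0 y" for y using lin_bound W0_ge by simp
    have W1: "1 \<le> W0 y" for y using W0_ge by simp
    have pw: "ennreal (phi (W0 y)) + indicator (-C) y * \<Phi> m y \<le> ennreal ((K + 1) * W0 y)" for m y
    proof (cases "y \<in> C")
      case True
      have "phi (W0 y) \<le> (K + 1) * W0 y" using lb[of y] W1[of y] by (simp add: algebra_simps)
      then show ?thesis using True by (simp add: ennreal_leI)
    next
      case False
      have "0 \<le> (K + 1) * W0 y - phi (W0 y)" using lb[of y] W1[of y] by (simp add: algebra_simps)
      then have "ennreal (phi (W0 y)) + \<Phi> m y = ennreal ((K + 1) * W0 y)"
        unfolding \<Phi>_def using phiW_pos[of y] by (simp add: ennreal_plus[symmetric])
      then show ?thesis using False by simp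
    qed
    have step: "(\<integral>\<^sup>+y. (ennreal (phi (W0 y)) + indicator (-C) y * \<Phi> (Suc n) y) \<partial>P y') \<le> \<Phi> n y'"
      if y': "y' \<notin> C" for n y'
    proof -
      have K0: "0 \<le> K + 1" using K_pos by simp
      have "(\<integral>\<^sup>+y. (ennreal (phi (W0 y)) + indicator (-C) y * \<Phi> (Suc n) y) \<partial>P y')
          \<le> (\<integral>\<^sup>+y. ennreal (K + 1) * ennreal (W0 y) \<partial>P y')"
      proof (rule nn_integral_mono)
        fix y
        have "ennreal (K + 1) * ennreal (W0 y) = ennreal ((K + 1) * W0 y)"
          using K0 W1[of y] by (intro ennreal_mult[symmetric]) auto
        then show "ennreal (phi (W0 y)) + indicator (-C) y * \<Phi> (Suc n) y \<le> ennreal (K + 1) * ennreal (W0 y)"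
          using pw[of y "Suc n"] by simp
      qed
      also have "\<dots> = ennreal (K + 1) * I y'"
        unfolding I_def by (rule nn_integral_cmult) (auto intro: PM)
      also have "\<dots> \<le> ennreal (K + 1) * ennreal (W0 y' - phi (W0 y'))"
        using drift_r(2)[OF y'] by (rule mult_left_mono) simp
      also have "\<dots> = ennreal ((K + 1) * (W0 y' - phi (W0 y')))"
        using K0 drift_r(1)[OF y'] by (intro ennreal_mult[symmetric]) auto
      also have "\<dots> \<le> \<Phi> n y'" unfolding \<Phi>_def
        using K_pos phiW_pos[of y'] by (intro ennreal_leI) (simp add: algebra_simps)
      finally show ?thesis .
    qed
    have "\<And>n. (\<integral>\<^sup>+\<omega>. Ssum C (\<lambda>k y. ennreal (phi (W0 y))) n \<omega> \<partial>chain_path M P x n)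
        \<le> ennreal (phi (W0 x)) + indicator (-C) x * \<Phi> 0 x"
      by (rule forward[OF space_M kernel Cm fV \<Phi>m]) (rule step)
    then have "V0 x \<le> ennreal (phi (W0 x)) + indicator (-C) x * \<Phi> 0 x"
      unfolding V0_def Ssum_eq by (rule SUP_least)
    also have "\<dots> \<le> ennreal ((K + 1) * W0 x)" by (rule pw)
    finally show ?thesis .
  qed
  define qW where "qW x = (\<integral>\<^sup>+y. ennreal (W0 y) \<partial>Q x)" for x
  define S where "S = (SUP x\<in>C. \<integral>\<^sup>+ y. ennreal (W0 y) \<partial>P x)"
  define b where "b = (enn2real S - \<epsilon> * enn2real (\<integral>\<^sup>+ y. ennreal (W0 y) \<partial>\<nu>)) / (1 - \<epsilon>)"
  define B where "B = (if \<epsilon> < 1 then b else enn2real S)"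
  have Sfin: "S < \<infinity>" unfolding S_def using sup_PW0 by simp
  have IS: "I x \<le> S" if "x \<in> C" for x unfolding I_def S_def using that by (rule SUP_upper)
  have Ifin_in: "I x = ennreal (enn2real (I x))" "enn2real (I x) \<le> enn2real S" if x: "x \<in> C" for x
  proof -
    have "I x < \<infinity>" using IS[OF x] Sfin by (rule le_less_trans)
    then show "I x = ennreal (enn2real (I x))" by simp
    show "enn2real (I x) \<le> enn2real S" using IS[OF x] Sfin by (intro enn2real_mono) auto
  qed
  have eps_le1: "\<epsilon> \<le> 1"
  proof -
    obtain x where "x \<in> C" unfolding C_def by auto
    then have "\<epsilon> * measure \<nu> (space M) \<le> measure (P x) (space M)" using minor by auto
    moreover have "measure \<nu> (space M) = 1" "measure (P x) (space M) = 1"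
      using prob_space.prob_space[OF nup(1)] prob_space.prob_space[OF Pp(1)[of x]]
        sets_eq_imp_space_eq[OF nup(2)] sets_eq_imp_space_eq[OF Pp(2)[of x]] by auto
    ultimately show ?thesis by simp
  qed
  have QP: "prob_space (Q x)" "sets (Q x) = sets M" "qW x = ennreal (enn2real (qW x))" "enn2real (qW x) \<le> B"
    if x: "x \<in> C" for x
  proof -
    have minx: "\<forall>A\<in>sets M. \<epsilon> * measure \<nu> A \<le> measure (P x) A" using minor x by blast
    have "prob_space (Q x) \<and> sets (Q x) = sets M \<and> qW x = ennreal (enn2real (qW x)) \<and> enn2real (qW x) \<le> B"
    proof (cases "\<epsilon> < 1")
      case True
      note QD = Q_decomp[where P=P and x=x and M=M, OF Pp(1)[of x] Pp(2)[of x] nup eps_pos True minx]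
      have dec: "I x = ennreal (1 - \<epsilon>) * qW x + ennreal \<epsilon> * (\<integral>\<^sup>+y. ennreal (W0 y) \<partial>\<nu>)"
        unfolding I_def qW_def Q_def by (rule QD(3)) simp
      have Ilt: "I x < \<infinity>" using IS[OF x] Sfin by (rule le_less_trans)
      have qlt: "qW x < \<infinity>"
      proof (rule ccontr)
        assume "\<not> qW x < \<infinity>"
        then have "qW x = \<infinity>" by (simp add: less_top[symmetric])
        then have "ennreal (1 - \<epsilon>) * qW x = \<infinity>" using True by (simp add: ennreal_mult_eq_top_iff)
        then show False using dec Ilt by simp
      qed
      have jlt: "(\<integral>\<^sup>+y. ennreal (W0 y) \<partial>\<nu>) < \<infinity>"
      proof (rule ccontr)
        assume "\<not> (\<integral>\<^sup>+y. ennreal (W0 y) \<partial>\<nu>) < \<infinity>"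
        then have "(\<integral>\<^sup>+y. ennreal (W0 y) \<partial>\<nu>) = \<infinity>" by (simp add: less_top[symmetric])
        then have "ennreal \<epsilon> * (\<integral>\<^sup>+y. ennreal (W0 y) \<partial>\<nu>) = \<infinity>" using eps_pos by (simp add: ennreal_mult_eq_top_iff)
        then show False using dec Ilt by simp
      qed
      define qr where "qr = enn2real (qW x)"
      define jr where "jr = enn2real (\<integral>\<^sup>+y. ennreal (W0 y) \<partial>\<nu>)"
      have qe: "qW x = ennreal qr" unfolding qr_def using qlt by simp
      have je: "(\<integral>\<^sup>+y. ennreal (W0 y) \<partial>\<nu>) = ennreal jr" unfolding jr_def using jlt by simp
      have qr0: "0 \<le> qr" "0 \<le> jr" unfolding qr_def jr_def by simp_all
      have Ieq: "I x = ennreal ((1 - \<epsilon>) * qr + \<epsilon> * jr)"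
        unfolding dec qe je using True eps_pos qr0 by (simp add: ennreal_mult ennreal_plus)
      have nn: "0 \<le> (1 - \<epsilon>) * qr + \<epsilon> * jr" using True eps_pos qr0 by simp
      have "enn2real (I x) = (1 - \<epsilon>) * qr + \<epsilon> * jr" unfolding Ieq by (rule enn2real_ennreal[OF nn])
      then have "(1 - \<epsilon>) * qr + \<epsilon> * jr \<le> enn2real S" using Ifin_in(2)[OF x] by simp
      then have "qr \<le> b" unfolding b_def jr_def[symmetric] using True by (simp add: field_simps)
      then have "enn2real (qW x) \<le> B" unfolding B_def qr_def using True by simp
      then show ?thesis using QD(1,2) qe unfolding Q_def by simp
    next
      case False
      then have e1: "\<epsilon> = 1" using eps_le1 by simp
      have Qnu: "Q x = \<nu>" unfolding Q_def residual_kernel_def using e1 by simp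
      have Pnu: "P x = \<nu>"
      proof (rule measure_eqI)
        show "sets (P x) = sets \<nu>" using Pp(2) nup(2) by simp
        fix A assume "A \<in> sets (P x)"
        then have A: "A \<in> sets M" using Pp(2) by simp
        then have cA: "space M - A \<in> sets M" by auto
        have le1: "measure \<nu> A \<le> measure (P x) A" using minx A e1 by auto
        have le2: "measure \<nu> (space M - A) \<le> measure (P x) (space M - A)" using minx cA e1 by auto
        have "measure \<nu> (space M - A) = 1 - measure \<nu> A"
          using prob_space.prob_compl[OF nup(1), of A] A nup(2) sets_eq_imp_space_eq[OF nup(2)] by simp
        moreover have "measure (P x) (space M - A) = 1 - measure (P x) A"
          using prob_space.prob_compl[OF Pp(1)[of x], of A] A Pp(2)[of x] sets_eq_imp_space_eq[OF Pp(2)[of x]] by simp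
        ultimately have "measure (P x) A = measure \<nu> A" using le1 le2 by simp
        then show "emeasure (P x) A = emeasure \<nu> A"
        proof -
          interpret Px: prob_space "P x" by (rule Pp(1))
          interpret nu: prob_space \<nu> by (rule nup(1))
          show ?thesis using \<open>measure (P x) A = measure \<nu> A\<close> by (simp add: Px.emeasure_eq_measure nu.emeasure_eq_measure)
        qed
      qed
      have qI: "qW x = I x" unfolding qW_def I_def Qnu Pnu ..
      show ?thesis using Ifin_in[OF x] qI Qnu nup unfolding B_def using False by simp
    qed
    then show "prob_space (Q x)" "sets (Q x) = sets M" "qW x = ennreal (enn2real (qW x))" "enn2real (qW x) \<le> B"
      by auto
  qed
  have QM: "f \<in> borel_measurable (Q x)" if "x \<in> C" "f \<in> borel_measurable M" for f x
    unfolding measurable_cong_sets[OF QP(2)[OF that(1)] refl] by (rule that(2))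
  have Q1: "emeasure (Q x) (space (Q x)) = 1" if "x \<in> C" for x
    using prob_space.emeasure_space_1[OF QP(1)[OF that]] .
  have QU: "(\<integral>\<^sup>+ y. U0 y \<partial>Q x) \<le> ennreal (1 + c * (B - 1))" if x: "x \<in> C" for x
  proof -
    have "(\<integral>\<^sup>+ y. U0 y \<partial>Q x) \<le> (\<integral>\<^sup>+ y. ennreal ((1 - c) + c * W0 y) \<partial>Q x)"
    proof (rule nn_integral_mono)
      fix y
      have "c * (W0 y - 1) * indicator (- C) y \<le> c * (W0 y - 1)"
        using c0 W0_ge by (simp add: indicator_def mult_le_cancel_left1)
      then have "1 + c * (W0 y - 1) * indicator (- C) y \<le> (1 - c) + c * W0 y" by (simp add: algebra_simps)
      then show "U0 y \<le> ennreal ((1 - c) + c * W0 y)" using UB[of y] by (meson ennreal_leI order_trans)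
    qed
    also have "\<dots> = ennreal ((1 - c) + c * enn2real (qW x))"
    proof (rule lin_int[OF QP(1)[OF x] QM[OF x W0m]])
      show "0 \<le> W0 y" for y using W0_ge[rule_format, of y] by simp
      show "(\<integral>\<^sup>+y. ennreal (W0 y) \<partial>Q x) = ennreal (enn2real (qW x))" using QP(3)[OF x] unfolding qW_def by simp
      show "0 \<le> 1 - c + c * W0 y" for y
      proof -
        have "c * 1 \<le> c * W0 y" using c0 W0_ge[rule_format, of y] by (intro mult_left_mono) auto
        then show ?thesis by simp
      qed
    qed simp
    also have "\<dots> \<le> ennreal (1 + c * (B - 1))"
    proof (rule ennreal_leI)
      have "c * enn2real (qW x) \<le> c * B" using QP(4)[OF x] c0 by (rule mult_left_mono)
      then show "1 - c + c * enn2real (qW x) \<le> 1 + c * (B - 1)" by (simp add: algebra_simps)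
    qed
    finally show ?thesis .
  qed
  have QV1: "(\<integral>\<^sup>+ y. V0 y \<partial>Q x) \<le> s + ennreal B" if x: "x \<in> C" for x
  proof -
    have "(\<integral>\<^sup>+ y. V0 y \<partial>Q x) \<le> (\<integral>\<^sup>+ y. s + ennreal (W0 y) \<partial>Q x)"
    proof (rule nn_integral_mono)
      fix y
      have "ennreal (W0 y * indicator (- C) y) \<le> ennreal (W0 y)"
        using W0_ge[rule_format, of y] by (intro ennreal_leI) (simp add: indicator_def)
      then show "V0 y \<le> s + ennreal (W0 y)" using VB1[of y] by (meson add_left_mono order_trans)
    qed
    also have "\<dots> = (\<integral>\<^sup>+ y. s \<partial>Q x) + qW x"
      unfolding qW_def by (rule nn_integral_add) (auto intro: QM[OF x])
    also have "\<dots> = s + ennreal (enn2real (qW x))" using Q1[OF x] QP(3)[OF x] by simp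
    also have "\<dots> \<le> s + ennreal B" using QP(4)[OF x] by (intro add_left_mono ennreal_leI)
    finally show ?thesis .
  qed
  have QV2: "(\<integral>\<^sup>+ y. V0 y \<partial>Q x) \<le> ennreal ((K + 1) * B)" if x: "x \<in> C" for x
  proof -
    have K0: "0 \<le> K + 1" using K_pos by simp
    have "(\<integral>\<^sup>+ y. V0 y \<partial>Q x) \<le> (\<integral>\<^sup>+ y. ennreal (K + 1) * ennreal (W0 y) \<partial>Q x)"
    proof (rule nn_integral_mono)
      fix y
      have "ennreal (K + 1) * ennreal (W0 y) = ennreal ((K + 1) * W0 y)"
        using K0 W0_ge[rule_format, of y] by (intro ennreal_mult[symmetric]) auto
      then show "V0 y \<le> ennreal (K + 1) * ennreal (W0 y)" using VB2[of y] by simp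
    qed
    also have "\<dots> = ennreal (K + 1) * qW x"
      unfolding qW_def by (rule nn_integral_cmult) (auto intro: QM[OF x])
    also have "\<dots> = ennreal ((K + 1) * enn2real (qW x))"
      using QP(3)[OF x] K0 by (metis enn2real_nonneg ennreal_mult)
    also have "\<dots> \<le> ennreal ((K + 1) * B)"
      using QP(4)[OF x] K0 by (intro ennreal_leI mult_left_mono)
    finally show ?thesis .
  qed
  have fin1: "\<forall>x. U0 x < \<infinity>"
  proof
    fix x show "U0 x < \<infinity>" using le_less_trans[OF UB[of x] ennreal_less_top] by simp
  qed
  have fin2: "\<forall>x. V0 x < \<infinity>"
  proof
    fix x show "V0 x < \<infinity>" using le_less_trans[OF VB2[of x] ennreal_less_top] by simp
  qed
  have sU: "(SUP x\<in>C. \<integral>\<^sup>+ y. U0 y \<partial>Q x) \<le> ennreal (1 + c * (B - 1))"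
    by (rule SUP_least) (rule QU)
  have sV: "(SUP x\<in>C. \<integral>\<^sup>+ y. V0 y \<partial>Q x) \<le> ennreal ((K + 1) * B)"
    by (rule SUP_least) (rule QV2)
  have sV1: "(SUP x\<in>C. \<integral>\<^sup>+ y. V0 y \<partial>Q x) \<le> s + ennreal B"
    by (rule SUP_least) (rule QV1)
  have fin3: "(SUP x\<in>C. \<integral>\<^sup>+ y. U0 y \<partial>Q x) < \<infinity>"
    using le_less_trans[OF sU ennreal_less_top] by simp
  have fin4: "(SUP x\<in>C. \<integral>\<^sup>+ y. V0 y \<partial>Q x) < \<infinity>"
    using le_less_trans[OF sV ennreal_less_top] by simp
  have last: "\<epsilon> < 1 \<longrightarrow> (let b = (enn2real (SUP x\<in>C. \<integral>\<^sup>+ y. ennreal (W0 y) \<partial>P x)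
                   - \<epsilon> * enn2real (\<integral>\<^sup>+ y. ennreal (W0 y) \<partial>\<nu>)) / (1 - \<epsilon>)
          in (SUP x\<in>C. \<integral>\<^sup>+ y. U0 y \<partial>Q x) \<le> ennreal (1 + r_phi phi 1 / phi 1 * (b - 1))
           \<and> (SUP x\<in>C. \<integral>\<^sup>+ y. V0 y \<partial>Q x) \<le> (SUP y\<in>C. ennreal (phi (W0 y))) + ennreal b)"
  proof
    assume e1: "\<epsilon> < 1"
    then have "B = b" unfolding B_def by simp
    then show "let b = (enn2real (SUP x\<in>C. \<integral>\<^sup>+ y. ennreal (W0 y) \<partial>P x)
                   - \<epsilon> * enn2real (\<integral>\<^sup>+ y. ennreal (W0 y) \<partial>\<nu>)) / (1 - \<epsilon>)
          in (SUP x\<in>C. \<integral>\<^sup>+ y. U0 y \<partial>Q x) \<le> ennreal (1 + r_phi phi 1 / phi 1 * (b - 1))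
           \<and> (SUP x\<in>C. \<integral>\<^sup>+ y. V0 y \<partial>Q x) \<le> (SUP y\<in>C. ennreal (phi (W0 y))) + ennreal b"
      using sU sV1 unfolding Let_def b_def S_def c_def s_def by simp
  qed
  have UB': "\<forall>x. U0 x \<le> ennreal (1 + r_phi phi 1 / phi 1 * (W0 x - 1) * indicator (- C) x)"
    using UB unfolding c_def by simp
  have VB1': "\<forall>x. V0 x \<le> (SUP y\<in>C. ennreal (phi (W0 y))) + ennreal (W0 x * indicator (- C) x)"
    using VB1 unfolding s_def by simp
  show ?thesis
    by (intro conjI fin1 fin2 fin3 fin4 UB' VB1' last)
qed


end
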